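(* Let $K,d,S,N$ be positive integers with $S+2\le N\le d(K-1)+S$, let $C\triangleq d(K-1)+S+1-N$, let $\boldsymbol{\mathcal{N}}=\{\mathcal{N}_g:g\in[G]\}$ be a non-straggler pattern with intersection $\mathcal{I}=\bigcap_{g\in[G]}\mathcal{N}_g$ of size $I=|\mathcal{I}|$, and let $L\triangleq N-S-I$. Let $\alpha_0,\dots,\alpha_{K-1}\in\mathbb{C}$ be data points, $\beta_0,\dots,\beta_{N-1}\in\mathbb{C}$ evaluation points and $\boldsymbol{w}\in\mathbb{C}^K$ a weight vector. Suppose that $$\sum_{k=0}^{K-1}w_k\,P_{\mathcal{I}}(\alpha_k)\,\alpha_k^j=0\quad\text{for all } j\in[C+L],$$ where $P_{\mathcal{I}}(z)\triangleq\prod_{n\in\mathcal{I}}(z-\beta_n)$. Then $$\sum_{k=0}^{K-1}w_k\,P_g(\alpha_k)\,\alpha_k^j=0\quad\text{for all } j\in[C],\ g\in[G],$$ where $P_g(z)\triangleq\prod_{n\in\mathcal{N}_g}(z-\beta_n)$.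
   Context: Notation: for a positive integer $m$, $[m]=\{0,1,\dots,m-1\}$. A non-straggler pattern is a collection $\boldsymbol{\mathcal{N}}=\{\mathcal{N}_g:g\in[G]\}$ of subsets $\mathcal{N}_g\subseteq[N]$, each of cardinality $N-S$. *)

theory Defs
  imports Complex_Main
begin

definition non_straggler_pattern :: "nat \<Rightarrow> nat \<Rightarrow> nat \<Rightarrow> (nat \<Rightarrow> nat set) \<Rightarrow> bool" where
  "non_straggler_pattern N S G Ns \<longleftrightarrow>
     (\<forall>g<G. Ns g \<subseteq> {..<N} \<and> card (Ns g) = N - S)"

definition pattern_inter :: "nat \<Rightarrow> nat \<Rightarrow> (nat \<Rightarrow> nat set) \<Rightarrow> nat set" where
  "pattern_inter N G Ns = {n \<in> {..<N}. \<forall>g<G. n \<in> Ns g}"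

end

theory Submission
  imports Defs "HOL-Computational_Algebra.Polynomial"
begin

lemma prod_expand:
  fixes b :: "nat \<Rightarrow> complex"
  assumes "finite D"
  shows "\<exists>c. \<forall>x. (\<Prod>n\<in>D. x - b n) = (\<Sum>i\<le>card D. c i * x ^ i)"
proof -
  define p where "p = (\<Prod>n\<in>D. [:- b n, 1:])"
  have dp: "degree p = card D"
    unfolding p_def by (subst degree_prod_eq_sum_degree) auto
  have "\<forall>x. (\<Prod>n\<in>D. x - b n) = (\<Sum>i\<le>card D. coeff p i * x ^ i)"
  proof
    fix x
    have "(\<Prod>n\<in>D. x - b n) = poly p x" unfolding p_def by (simp add: poly_prod)
    also have "\<dots> = (\<Sum>i\<le>degree p. coeff p i * x ^ i)" by (rule poly_altdef)
    finally show "(\<Prod>n\<in>D. x - b n) = (\<Sum>i\<le>card D. coeff p i * x ^ i)" by (simp only: dp)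
  qed
  then show ?thesis by blast
qed

theorem lemma2:
  fixes K d S N G :: nat
    and Ns :: "nat \<Rightarrow> nat set"
    and \<alpha> \<beta> w :: "nat \<Rightarrow> complex"
  assumes "K > 0" and "d > 0" and "S > 0" and "N > 0"
    and "S + 2 \<le> N" and "N \<le> d * (K - 1) + S"
    and "non_straggler_pattern N S G Ns"
    and "\<forall>j < (d * (K - 1) + S + 1 - N) + (N - S - card (pattern_inter N G Ns)).
           (\<Sum>k<K. w k * (\<Prod>n\<in>pattern_inter N G Ns. \<alpha> k - \<beta> n) * \<alpha> k ^ j) = 0"
  shows "\<forall>j < d * (K - 1) + S + 1 - N. \<forall>g < G.
           (\<Sum>k<K. w k * (\<Prod>n\<in>Ns g. \<alpha> k - \<beta> n) * \<alpha> k ^ j) = 0"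
proof (intro allI impI)
  fix j g assume j: "j < d * (K - 1) + S + 1 - N" and g: "g < G"
  define I where "I = pattern_inter N G Ns"
  define D where "D = Ns g - I"
  have sub: "Ns g \<subseteq> {..<N}" and cg: "card (Ns g) = N - S"
    using assms(7) g unfolding non_straggler_pattern_def by auto
  have IN: "I \<subseteq> Ns g" using g unfolding I_def pattern_inter_def by auto
  have fin: "finite (Ns g)" using sub finite_subset by blast
  have finI: "finite I" using IN fin finite_subset by blast
  have finD: "finite D" using fin D_def by auto
  have cD: "card D = N - S - card I"
    unfolding D_def using card_Diff_subset[OF finI IN] cg by simp
  have split: "\<And>x. (\<Prod>n\<in>Ns g. x - \<beta> n) = (\<Prod>n\<in>I. x - \<beta> n) * (\<Prod>n\<in>D. x - \<beta> n)"
  proof -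
    fix x
    have "Ns g = I \<union> D" "I \<inter> D = {}" using IN D_def by auto
    then show "(\<Prod>n\<in>Ns g. x - \<beta> n) = (\<Prod>n\<in>I. x - \<beta> n) * (\<Prod>n\<in>D. x - \<beta> n)"
      using prod.union_disjoint[OF finI finD] by simp
  qed
  obtain c where c: "\<And>x. (\<Prod>n\<in>D. x - \<beta> n) = (\<Sum>i\<le>card D. c i * x ^ i)"
    using prod_expand[OF finD] by blast
  have "(\<Sum>k<K. w k * (\<Prod>n\<in>Ns g. \<alpha> k - \<beta> n) * \<alpha> k ^ j)
      = (\<Sum>k<K. \<Sum>i\<le>card D. c i * (w k * (\<Prod>n\<in>I. \<alpha> k - \<beta> n) * \<alpha> k ^ (i + j)))"
    apply (rule sum.cong[OF refl])
    apply (simp only: split c sum_distrib_left sum_distrib_right)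
    apply (rule sum.cong[OF refl])
    apply (simp add: power_add mult_ac)
    done
  also have "\<dots> = (\<Sum>i\<le>card D. c i * (\<Sum>k<K. w k * (\<Prod>n\<in>I. \<alpha> k - \<beta> n) * \<alpha> k ^ (i + j)))"
    by (subst sum.swap) (simp only: sum_distrib_left)
  also have "\<dots> = 0"
  proof (rule sum.neutral, rule ballI)
    fix i assume "i \<in> {..card D}"
    then have "i + j < (d * (K - 1) + S + 1 - N) + (N - S - card (pattern_inter N G Ns))"
      using j cD I_def by auto
    then show "c i * (\<Sum>k<K. w k * (\<Prod>n\<in>I. \<alpha> k - \<beta> n) * \<alpha> k ^ (i + j)) = 0"
      using assms(8) I_def by simp
  qed
  finally show "(\<Sum>k<K. w k * (\<Prod>n\<in>Ns g. \<alpha> k - \<beta> n) * \<alpha> k ^ j) = 0" .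
qed

end
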